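(* Let $B$ be an $n\times n$ matrix of non-negative integers whose last $n-m$ rows are zero. Suppose that $J_{nm}+B$ is irreducible and that its top-left $m\times m$ corner is irreducible. Suppose $B'$ is formed from $B$ in one of two ways: - by adding some column of $B$ to a different column; or - by adding some non-zero row of $B$ to a different non-zero row. Then $J_{nm}+B\sim_M J_{nm}+B'$.
   Context: $J_{nm}$ ($0\le m\le n$) is the $n\times n$ matrix whose $i$-th row, for $i\le m$, has a $1$ in position $i$ and $0$ elsewhere, and whose last $n-m$ rows consist entirely of $\infty$. Arithmetic convention: $\infty+a=\infty$. For an $X\times X$ matrix $A$ with entries in $\{0,1,2,\dots\}\cup\{\infty\}$, $G_A$ is the graph with vertex set $X$ and exactly $A(x,y)$ edges from $x$ to $y$. A matrix $A$ is irreducible if $G_A$ is strongly connected. For matrices, $A\sim_M B$ means $G_A\sim_M G_B$. A graph may have multiple edges and loops. A source receives no edges, a sink emits no edges, and an infinite emitter emits infinitely many edges. A vertex is singular if it is a sink or infinite emitter, and regular otherwise. Move-equivalence $\sim_M$ is the smallest equivalence relation on graphs with finitely many vertices such that $G\sim_M E$ whenever $E$ is isomorphic to a graph obtained from $G$ by one of the following moves. (S) Delete a regular source together with the edges it emits. (R) For a regular vertex $u$ emitting exactly one edge $f$, with $r(f)\neq u$, and all of whose incoming edges have the same source $v$: delete $u$, $f$ and the edges into $u$, and add for each $e\in r^{-1}(u)$ an edge $[ef]$ from $v$ to $r(f)$. (O) Out-splitting at a non-sink $v$ along a partition $\mathcal E_1,\dots,\mathcal E_n$ of $s^{-1}(v)$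 with at most one infinite part. Replace $v$ by $v^1,\dots,v^n$. Each edge $e$ into $v$ becomes copies $e^1,\dots,e^n$ with $r(e^i)=v^i$ and source $s(e)$, or source $v^j$ if $s(e)=v$ and $e\in\mathcal E_j$. An edge from $v$ to $w\neq v$ lying in $\mathcal E_i$ gets source $v^i$. (I) In-splitting at a regular non-source $v$ along a partition $\mathcal E_1,\dots,\mathcal E_n$ of $r^{-1}(v)$. Replace $v$ by $v^1,\dots,v^n$. Each edge $e$ out of $v$ becomes copies $e^1,\dots,e^n$ with $s(e^i)=v^i$ and range $r(e)$, or range $v^j$ if $r(e)=v$ and $e\in\mathcal E_j$. An edge into $v$ from $w\neq v$ lying in $\mathcal E_i$ gets range $v^i$. *)

theory Defs
  imports Main "HOL-Library.Extended_Nat" "HOL-Library.Nat_Bijection"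
begin

datatype ('v,'e) dgraph =
  DGraph (gverts: "'v set") (gedges: "'e set") (gsrc: "'e \<Rightarrow> 'v") (grng: "'e \<Rightarrow> 'v")

definition wf_graph :: "('v,'e) dgraph \<Rightarrow> bool" where
  "wf_graph G \<longleftrightarrow> finite (gverts G) \<and>
     (\<forall>e\<in>gedges G. gsrc G e \<in> gverts G \<and> grng G e \<in> gverts G)"

definition graph_iso :: "('v,'e) dgraph \<Rightarrow> ('w,'f) dgraph \<Rightarrow> bool" where
  "graph_iso G H \<longleftrightarrow> (\<exists>\<phi> \<psi>. bij_betw \<phi> (gverts G) (gverts H) \<and> bij_betw \<psi> (gedges G) (gedges H) \<and>
     (\<forall>e\<in>gedges G. gsrc H (\<psi> e) = \<phi> (gsrc G e) \<and> grng H (\<psi> e) = \<phi> (grng G e)))"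

definition emitted :: "('v,'e) dgraph \<Rightarrow> 'v \<Rightarrow> 'e set" where
  "emitted G v = {e \<in> gedges G. gsrc G e = v}"

definition received :: "('v,'e) dgraph \<Rightarrow> 'v \<Rightarrow> 'e set" where
  "received G v = {e \<in> gedges G. grng G e = v}"

definition is_source :: "('v,'e) dgraph \<Rightarrow> 'v \<Rightarrow> bool" where
  "is_source G v \<longleftrightarrow> received G v = {}"

definition is_sink :: "('v,'e) dgraph \<Rightarrow> 'v \<Rightarrow> bool" where
  "is_sink G v \<longleftrightarrow> emitted G v = {}"

definition is_inf_emitter :: "('v,'e) dgraph \<Rightarrow> 'v \<Rightarrow> bool" where
  "is_inf_emitter G v \<longleftrightarrow> infinite (emitted G v)"

definition is_regular :: "('v,'e) dgraph \<Rightarrow> 'v \<Rightarrow> bool" where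
  "is_regular G v \<longleftrightarrow> \<not> is_sink G v \<and> \<not> is_inf_emitter G v"

definition S_ok :: "('v,'e) dgraph \<Rightarrow> 'v \<Rightarrow> bool" where
  "S_ok G u \<longleftrightarrow> u \<in> gverts G \<and> is_regular G u \<and> is_source G u"

definition S_move :: "('v,'e) dgraph \<Rightarrow> 'v \<Rightarrow> ('v,'e) dgraph" where
  "S_move G u = DGraph (gverts G - {u}) (gedges G - emitted G u) (gsrc G) (grng G)"

definition R_ok :: "('v,'e) dgraph \<Rightarrow> 'v \<Rightarrow> 'e \<Rightarrow> 'v \<Rightarrow> bool" where
  "R_ok G u f v \<longleftrightarrow> u \<in> gverts G \<and> v \<in> gverts G \<and> is_regular G u \<and> emitted G u = {f} \<and>
     grng G f \<noteq> u \<and> (\<forall>e\<in>received G u. gsrc G e = v)"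

text \<open>Old edges are tagged Inl; the new edge [ef] for e into u is Inr e.\<close>
definition R_move :: "('v,'e) dgraph \<Rightarrow> 'v \<Rightarrow> 'e \<Rightarrow> 'v \<Rightarrow> ('v, 'e + 'e) dgraph" where
  "R_move G u f v = DGraph (gverts G - {u})
     (Inl ` (gedges G - {f} - received G u) \<union> Inr ` received G u)
     (\<lambda>x. case x of Inl e \<Rightarrow> gsrc G e | Inr e \<Rightarrow> v)
     (\<lambda>x. case x of Inl e \<Rightarrow> grng G e | Inr e \<Rightarrow> grng G f)"

text \<open>A partition of s^{-1}(v) into n (non-empty) parts is given by a labelling p with values < n,
  every label being attained.  Vertex w \<noteq> v is (w,0); the copies of v are (v,i), i<n.
  An edge e not into v is (e,0); the copies of an edge into v are (e,i), i<n.\<close>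
definition O_ok :: "('v,'e) dgraph \<Rightarrow> 'v \<Rightarrow> nat \<Rightarrow> ('e \<Rightarrow> nat) \<Rightarrow> bool" where
  "O_ok G v n p \<longleftrightarrow> v \<in> gverts G \<and> \<not> is_sink G v \<and>
     (\<forall>e\<in>emitted G v. p e < n) \<and> (\<forall>i<n. \<exists>e\<in>emitted G v. p e = i) \<and>
     card {i. i < n \<and> infinite {e\<in>emitted G v. p e = i}} \<le> 1"

definition O_move :: "('v,'e) dgraph \<Rightarrow> 'v \<Rightarrow> nat \<Rightarrow> ('e \<Rightarrow> nat) \<Rightarrow> ('v \<times> nat, 'e \<times> nat) dgraph" where
  "O_move G v n p = DGraph
     ({(w,0) | w. w \<in> gverts G \<and> w \<noteq> v} \<union> {(v,i) | i. i < n})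
     ({(e,0) | e. e \<in> gedges G \<and> grng G e \<noteq> v} \<union> {(e,i) | e i. e \<in> gedges G \<and> grng G e = v \<and> i < n})
     (\<lambda>(e,i). if gsrc G e = v then (v, p e) else (gsrc G e, 0))
     (\<lambda>(e,i). if grng G e = v then (v, i) else (grng G e, 0))"

definition I_ok :: "('v,'e) dgraph \<Rightarrow> 'v \<Rightarrow> nat \<Rightarrow> ('e \<Rightarrow> nat) \<Rightarrow> bool" where
  "I_ok G v n p \<longleftrightarrow> v \<in> gverts G \<and> is_regular G v \<and> \<not> is_source G v \<and>
     (\<forall>e\<in>received G v. p e < n) \<and> (\<forall>i<n. \<exists>e\<in>received G v. p e = i)"

definition I_move :: "('v,'e) dgraph \<Rightarrow> 'v \<Rightarrow> nat \<Rightarrow> ('e \<Rightarrow> nat) \<Rightarrow> ('v \<times> nat, 'e \<times> nat) dgraph" where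
  "I_move G v n p = DGraph
     ({(w,0) | w. w \<in> gverts G \<and> w \<noteq> v} \<union> {(v,i) | i. i < n})
     ({(e,0) | e. e \<in> gedges G \<and> gsrc G e \<noteq> v} \<union> {(e,i) | e i. e \<in> gedges G \<and> gsrc G e = v \<and> i < n})
     (\<lambda>(e,i). if gsrc G e = v then (v, i) else (gsrc G e, 0))
     (\<lambda>(e,i). if grng G e = v then (v, p e) else (grng G e, 0))"

text \<open>Graphs are taken in the universe of graphs with vertices and edges in nat
  (finitely many vertices, countably many edges); all moves preserve countability of edges.\<close>
type_synonym graph = "(nat, nat) dgraph"

definition move_step :: "graph \<Rightarrow> graph \<Rightarrow> bool" where
  "move_step G H \<longleftrightarrow> wf_graph G \<and> wf_graph H \<and>
     ((\<exists>u. S_ok G u \<and> graph_iso (S_move G u) H) \<or>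
      (\<exists>u f v. R_ok G u f v \<and> graph_iso (R_move G u f v) H) \<or>
      (\<exists>v n p. O_ok G v n p \<and> graph_iso (O_move G v n p) H) \<or>
      (\<exists>v n p. I_ok G v n p \<and> graph_iso (I_move G v n p) H))"

definition move_equiv :: "graph \<Rightarrow> graph \<Rightarrow> bool" (infix "\<sim>\<^sub>M" 50) where
  "G \<sim>\<^sub>M H \<longleftrightarrow> equivclp move_step G H"

text \<open>An n \<times> n matrix with entries in {0,1,...} \<union> {\<infinity>} is a function nat \<Rightarrow> nat \<Rightarrow> enat;
  only entries with indices < n matter (index set X = {0..<n}).\<close>

definition graph_of_matrix :: "nat \<Rightarrow> (nat \<Rightarrow> nat \<Rightarrow> enat) \<Rightarrow> graph" where
  "graph_of_matrix n A = DGraph {0..<n}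
     {prod_encode (x, prod_encode (y, k)) | x y k. x < n \<and> y < n \<and> enat k < A x y}
     (\<lambda>e. fst (prod_decode e))
     (\<lambda>e. fst (prod_decode (snd (prod_decode e))))"

definition strongly_connected :: "('v,'e) dgraph \<Rightarrow> bool" where
  "strongly_connected G \<longleftrightarrow>
     (\<forall>x\<in>gverts G. \<forall>y\<in>gverts G. (x, y) \<in> {(gsrc G e, grng G e) | e. e \<in> gedges G}\<^sup>*)"

definition irreducible_mat :: "nat \<Rightarrow> (nat \<Rightarrow> nat \<Rightarrow> enat) \<Rightarrow> bool" where
  "irreducible_mat n A \<longleftrightarrow> strongly_connected (graph_of_matrix n A)"

definition mat_move_equiv :: "nat \<Rightarrow> (nat \<Rightarrow> nat \<Rightarrow> enat) \<Rightarrow> (nat \<Rightarrow> nat \<Rightarrow> enat) \<Rightarrow> bool" where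
  "mat_move_equiv n A A' \<longleftrightarrow> graph_of_matrix n A \<sim>\<^sub>M graph_of_matrix n A'"

text \<open>J_{nm} (0-indexed): row i < m is the i-th unit row, rows i \<ge> m are all \<infinity>.\<close>
definition J_mat :: "nat \<Rightarrow> nat \<Rightarrow> nat \<Rightarrow> nat \<Rightarrow> enat" where
  "J_mat n m i j = (if i < m then (if i = j then 1 else 0) else \<infinity>)"

definition JplusB :: "nat \<Rightarrow> nat \<Rightarrow> (nat \<Rightarrow> nat \<Rightarrow> nat) \<Rightarrow> nat \<Rightarrow> nat \<Rightarrow> enat" where
  "JplusB n m B i j = J_mat n m i j + enat (B i j)"

definition add_column :: "(nat \<Rightarrow> nat \<Rightarrow> nat) \<Rightarrow> nat \<Rightarrow> nat \<Rightarrow> nat \<Rightarrow> nat \<Rightarrow> nat" where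
  "add_column B c d = (\<lambda>i j. if j = d then B i j + B i c else B i j)"

definition add_row :: "(nat \<Rightarrow> nat \<Rightarrow> nat) \<Rightarrow> nat \<Rightarrow> nat \<Rightarrow> nat \<Rightarrow> nat \<Rightarrow> nat" where
  "add_row B a b = (\<lambda>i j. if i = b then B i j + B a j else B i j)"

definition nonzero_row :: "nat \<Rightarrow> (nat \<Rightarrow> nat \<Rightarrow> nat) \<Rightarrow> nat \<Rightarrow> bool" where
  "nonzero_row n B a \<longleftrightarrow> (\<exists>j<n. B a j \<noteq> 0)"

end

theory Submission
  imports Defs "HOL-Library.Countable_Set"
begin


definition ecnt :: "'a set \<Rightarrow> enat" where
  "ecnt S = (if finite S then enat (card S) else \<infinity>)"

lemma ecnt_image: "inj_on f S \<Longrightarrow> ecnt (f ` S) = ecnt S"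
  by (simp add: ecnt_def finite_image_iff card_image)

lemma ecnt_empty[simp]: "ecnt {} = 0"
  by (simp add: ecnt_def zero_enat_def)

lemma ecnt_Un: "S \<inter> T = {} \<Longrightarrow> ecnt (S \<union> T) = ecnt S + ecnt T"
  by (auto simp: ecnt_def card_Un_disjoint)

lemma ecnt_lt: "ecnt {k::nat. enat k < N} = N"
proof (cases N)
  case (enat n)
  then have "{k::nat. enat k < N} = {..<n}" by auto
  then show ?thesis using enat by (simp add: ecnt_def)
next
  case infinity
  then show ?thesis by (simp add: ecnt_def)
qed

lemma ecnt_lt_min: "ecnt {k::nat. enat k < A \<and> enat k < P} = min A P"
proof -
  have "{k::nat. enat k < A \<and> enat k < P} = {k. enat k < min A P}" by auto
  then show ?thesis using ecnt_lt[of "min A P"] by simp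
qed

definition dm :: "enat \<Rightarrow> enat \<Rightarrow> enat" where
  "dm A P = (if P = \<infinity> then 0 else A - P)"

lemma ecnt_diff: "ecnt {k::nat. enat k < A \<and> \<not> enat k < P} = dm A P"
proof (cases P)
  case (enat p)
  show ?thesis
  proof (cases A)
    case (enat a)
    have "{k::nat. enat k < A \<and> \<not> enat k < P} = {p..<a}" using \<open>A = enat a\<close> \<open>P = enat p\<close> by auto
    then show ?thesis using \<open>A = enat a\<close> \<open>P = enat p\<close> by (simp add: ecnt_def dm_def)
  next
    case infinity
    have "{k::nat. enat k < A \<and> \<not> enat k < P} = {p..}" using infinity \<open>P = enat p\<close> by auto
    then show ?thesis using infinity \<open>P = enat p\<close> infinite_Ici[of p] by (simp add: ecnt_def dm_def)
  qed
next
  case infinity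
  then show ?thesis by (simp add: dm_def)
qed

lemma countable_bij_ecnt:
  assumes "countable S" "countable T" "ecnt S = ecnt T"
  shows "\<exists>f. bij_betw f S T"
proof (cases "finite S")
  case True
  then have "finite T" "card S = card T" using assms(3) by (auto simp: ecnt_def split: if_splits)
  then show ?thesis using True by (metis bij_betw_iff_card)
next
  case False
  then have "infinite T" using assms(3) by (auto simp: ecnt_def split: if_splits)
  have a: "bij_betw (to_nat_on S) S UNIV" using False assms(1) by (simp add: to_nat_on_infinite)
  have b: "bij_betw (to_nat_on T) T UNIV" using \<open>infinite T\<close> assms(2) by (simp add: to_nat_on_infinite)
  have "bij_betw (inv_into T (to_nat_on T) \<circ> to_nat_on S) S T"
    using a bij_betw_inv_into[OF b] by (rule bij_betw_trans)
  then show ?thesis by blast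
qed

definition Epair :: "('v,'e) dgraph \<Rightarrow> 'v \<Rightarrow> 'v \<Rightarrow> 'e set" where
  "Epair G x y = {e \<in> gedges G. gsrc G e = x \<and> grng G e = y}"

definition ec :: "('v,'e) dgraph \<Rightarrow> 'v \<Rightarrow> 'v \<Rightarrow> enat" where
  "ec G x y = ecnt (Epair G x y)"

lemma iso_by_counts:
  fixes G :: "('v,'e::countable) dgraph" and H :: "('w,'f::countable) dgraph"
  assumes wfG: "wf_graph G" and wfH: "wf_graph H"
    and bij: "bij_betw \<phi> (gverts G) (gverts H)"
    and cnt: "\<And>x y. x \<in> gverts G \<Longrightarrow> y \<in> gverts G \<Longrightarrow> ec G x y = ec H (\<phi> x) (\<phi> y)"
  shows "graph_iso G H"
proof -
  have "\<exists>f. bij_betw f (Epair G x y) (Epair H (\<phi> x) (\<phi> y))"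
    if "x \<in> gverts G" "y \<in> gverts G" for x y
    using countable_bij_ecnt[of "Epair G x y" "Epair H (\<phi> x) (\<phi> y)"] cnt[OF that]
    unfolding ec_def by (simp add: countableI_type)
  then have "\<forall>p. \<exists>f. fst p \<in> gverts G \<and> snd p \<in> gverts G \<longrightarrow>
       bij_betw f (Epair G (fst p) (snd p)) (Epair H (\<phi> (fst p)) (\<phi> (snd p)))" by auto
  then obtain \<beta>' where \<beta>': "\<And>p. fst p \<in> gverts G \<and> snd p \<in> gverts G \<longrightarrow>
       bij_betw (\<beta>' p) (Epair G (fst p) (snd p)) (Epair H (\<phi> (fst p)) (\<phi> (snd p)))"
    by metis
  define \<beta> where "\<beta> x y = \<beta>' (x,y)" for x y
  have \<beta>: "bij_betw (\<beta> x y) (Epair G x y) (Epair H (\<phi> x) (\<phi> y))"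
    if "x \<in> gverts G" "y \<in> gverts G" for x y
    using \<beta>'[of "(x,y)"] that by (simp add: \<beta>_def)
  define \<psi> where "\<psi> e = \<beta> (gsrc G e) (grng G e) e" for e
  have inE: "e \<in> Epair G (gsrc G e) (grng G e)" if "e \<in> gedges G" for e
    using that by (simp add: Epair_def)
  have vs: "gsrc G e \<in> gverts G" "grng G e \<in> gverts G" if "e \<in> gedges G" for e
    using that wfG by (auto simp: wf_graph_def)
  have img: "\<psi> e \<in> Epair H (\<phi> (gsrc G e)) (\<phi> (grng G e))" if "e \<in> gedges G" for e
    using \<beta>[OF vs[OF that]] inE[OF that] unfolding \<psi>_def bij_betw_def by blast
  have injphi: "inj_on \<phi> (gverts G)" using bij by (simp add: bij_betw_def)
  have "inj_on \<psi> (gedges G)"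
  proof (rule inj_onI)
    fix e1 e2 assume e1: "e1 \<in> gedges G" and e2: "e2 \<in> gedges G" and eq: "\<psi> e1 = \<psi> e2"
    from img[OF e1] img[OF e2] eq have "\<phi> (gsrc G e1) = \<phi> (gsrc G e2)" "\<phi> (grng G e1) = \<phi> (grng G e2)"
      by (auto simp: Epair_def)
    then have s: "gsrc G e1 = gsrc G e2" and r: "grng G e1 = grng G e2"
      using injphi vs[OF e1] vs[OF e2] by (auto dest: inj_onD)
    have "inj_on (\<beta> (gsrc G e1) (grng G e1)) (Epair G (gsrc G e1) (grng G e1))"
      using \<beta>[OF vs[OF e1]] by (simp add: bij_betw_def)
    moreover have "e2 \<in> Epair G (gsrc G e1) (grng G e1)" using inE[OF e2] s r by simp
    ultimately show "e1 = e2" using inE[OF e1] eq s r unfolding \<psi>_def by (auto dest: inj_onD)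
  qed
  moreover have "\<psi> ` gedges G = gedges H"
  proof
    show "\<psi> ` gedges G \<subseteq> gedges H" using img by (auto simp: Epair_def)
  next
    show "gedges H \<subseteq> \<psi> ` gedges G"
    proof
      fix h assume h: "h \<in> gedges H"
      then have "gsrc H h \<in> gverts H" "grng H h \<in> gverts H" using wfH by (auto simp: wf_graph_def)
      then obtain x y where x: "x \<in> gverts G" "gsrc H h = \<phi> x" and y: "y \<in> gverts G" "grng H h = \<phi> y"
        using bij by (metis bij_betw_imp_surj_on imageE)
      have "h \<in> Epair H (\<phi> x) (\<phi> y)" using h x y by (simp add: Epair_def)
      then obtain e where e: "e \<in> Epair G x y" "h = \<beta> x y e"
        using \<beta>[OF x(1) y(1)] by (metis bij_betw_imp_surj_on imageE)
      then have "e \<in> gedges G" "gsrc G e = x" "grng G e = y" by (auto simp: Epair_def)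
      then show "h \<in> \<psi> ` gedges G" using e unfolding \<psi>_def by auto
    qed
  qed
  ultimately have "bij_betw \<psi> (gedges G) (gedges H)" by (simp add: bij_betw_def)
  moreover have "\<forall>e\<in>gedges G. gsrc H (\<psi> e) = \<phi> (gsrc G e) \<and> grng H (\<psi> e) = \<phi> (grng G e)"
    using img by (auto simp: Epair_def)
  ultimately show ?thesis using bij unfolding graph_iso_def by blast
qed

definition enc :: "nat \<Rightarrow> nat \<Rightarrow> nat \<Rightarrow> nat" where
  "enc x y k = prod_encode (x, prod_encode (y, k))"

definition xof :: "nat \<Rightarrow> nat" where "xof e = fst (prod_decode e)"
definition yof :: "nat \<Rightarrow> nat" where "yof e = fst (prod_decode (snd (prod_decode e)))"
definition kof :: "nat \<Rightarrow> nat" where "kof e = snd (prod_decode (snd (prod_decode e)))"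

lemma enc_simps[simp]: "xof (enc x y k) = x" "yof (enc x y k) = y" "kof (enc x y k) = k"
  by (simp_all add: enc_def xof_def yof_def kof_def)

lemma enc_inj[simp]: "enc x y k = enc x' y' k' \<longleftrightarrow> x = x' \<and> y = y' \<and> k = k'"
  by (auto simp: enc_def prod_encode_eq)

definition gm :: "nat set \<Rightarrow> (nat \<Rightarrow> nat \<Rightarrow> enat) \<Rightarrow> graph" where
  "gm V A = DGraph V {enc x y k | x y k. x \<in> V \<and> y \<in> V \<and> enat k < A x y} xof yof"

lemma gm_sel[simp]: "gverts (gm V A) = V" "gedges (gm V A) = {enc x y k | x y k. x \<in> V \<and> y \<in> V \<and> enat k < A x y}"
  "gsrc (gm V A) = xof" "grng (gm V A) = yof"
  by (simp_all add: gm_def)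

lemma gom_gm: "graph_of_matrix n A = gm {0..<n} A"
  by (simp add: graph_of_matrix_def gm_def enc_def xof_def yof_def fun_eq_iff)

lemma wf_gm: "finite V \<Longrightarrow> wf_graph (gm V A)"
  by (auto simp: wf_graph_def)

lemma gm_cong: "(\<And>x y. x \<in> V \<Longrightarrow> y \<in> V \<Longrightarrow> A x y = B x y) \<Longrightarrow> gm V A = gm V B"
  unfolding gm_def by (rule arg_cong[where f="\<lambda>E. DGraph V E xof yof"]) auto

lemma Epair_gm: "x \<in> V \<Longrightarrow> y \<in> V \<Longrightarrow> Epair (gm V A) x y = enc x y ` {k. enat k < A x y}"
  by (auto simp: Epair_def)

lemma inj_enc: "inj_on (enc x y) S"
  by (auto simp: inj_on_def)

lemma ec_gm: "x \<in> V \<Longrightarrow> y \<in> V \<Longrightarrow> ec (gm V A) x y = A x y"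
  by (simp add: ec_def Epair_gm ecnt_image inj_enc ecnt_lt)

lemma Epair_gm_filter: "x \<in> V \<Longrightarrow> y \<in> V \<Longrightarrow>
   {e \<in> Epair (gm V A) x y. Q e} = enc x y ` {k. enat k < A x y \<and> Q (enc x y k)}"
  by (auto simp: Epair_def)

lemma O_sel[simp]: "gverts (O_move G v n p) = {(w,0) | w. w \<in> gverts G \<and> w \<noteq> v} \<union> {(v,i) | i. i < n}"
  "gedges (O_move G v n p) = {(e,0) | e. e \<in> gedges G \<and> grng G e \<noteq> v} \<union> {(e,i) | e i. e \<in> gedges G \<and> grng G e = v \<and> i < n}"
  "gsrc (O_move G v n p) = (\<lambda>(e,i). if gsrc G e = v then (v, p e) else (gsrc G e, 0))"
  "grng (O_move G v n p) = (\<lambda>(e,i). if grng G e = v then (v, i) else (grng G e, 0))"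
  by (simp_all add: O_move_def)

lemma I_sel[simp]: "gverts (I_move G v n p) = {(w,0) | w. w \<in> gverts G \<and> w \<noteq> v} \<union> {(v,i) | i. i < n}"
  "gedges (I_move G v n p) = {(e,0) | e. e \<in> gedges G \<and> gsrc G e \<noteq> v} \<union> {(e,i) | e i. e \<in> gedges G \<and> gsrc G e = v \<and> i < n}"
  "gsrc (I_move G v n p) = (\<lambda>(e,i). if gsrc G e = v then (v, i) else (gsrc G e, 0))"
  "grng (I_move G v n p) = (\<lambda>(e,i). if grng G e = v then (v, p e) else (grng G e, 0))"
  by (simp_all add: I_move_def)

lemma R_sel[simp]: "gverts (R_move G u f v) = gverts G - {u}"
  "gedges (R_move G u f v) = Inl ` (gedges G - {f} - received G u) \<union> Inr ` received G u"
  "gsrc (R_move G u f v) = (\<lambda>x. case x of Inl e \<Rightarrow> gsrc G e | Inr e \<Rightarrow> v)"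
  "grng (R_move G u f v) = (\<lambda>x. case x of Inl e \<Rightarrow> grng G e | Inr e \<Rightarrow> grng G f)"
  by (simp_all add: R_move_def)

lemma Epair_O:
  assumes "(x,i) \<in> gverts (O_move G v n p)" "(y,j) \<in> gverts (O_move G v n p)"
  shows "Epair (O_move G v n p) (x,i) (y,j) = (\<lambda>e. (e,j)) ` {e \<in> Epair G x y. x = v \<longrightarrow> p e = i}"
  using assms by (auto simp: Epair_def split: if_splits)

lemma Epair_I:
  assumes "(x,i) \<in> gverts (I_move G v n p)" "(y,j) \<in> gverts (I_move G v n p)"
  shows "Epair (I_move G v n p) (x,i) (y,j) = (\<lambda>e. (e,i)) ` {e \<in> Epair G x y. y = v \<longrightarrow> p e = j}"
  using assms by (auto simp: Epair_def split: if_splits)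

lemma Epair_R:
  assumes "x \<in> gverts G - {u}" "y \<in> gverts G - {u}" "gsrc G f = u"
  shows "Epair (R_move G u f s) x y = Inl ` Epair G x y \<union> (if x = s \<and> y = grng G f then Inr ` received G u else {})"
  using assms by (auto simp: Epair_def received_def)

lemma ec_O:
  assumes "(x,i) \<in> gverts (O_move G v n p)" "(y,j) \<in> gverts (O_move G v n p)"
  shows "ec (O_move G v n p) (x,i) (y,j) = ecnt {e \<in> Epair G x y. x = v \<longrightarrow> p e = i}"
  unfolding ec_def Epair_O[OF assms] by (rule ecnt_image) (auto simp: inj_on_def)

lemma ec_I:
  assumes "(x,i) \<in> gverts (I_move G v n p)" "(y,j) \<in> gverts (I_move G v n p)"
  shows "ec (I_move G v n p) (x,i) (y,j) = ecnt {e \<in> Epair G x y. y = v \<longrightarrow> p e = j}"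
  unfolding ec_def Epair_I[OF assms] by (rule ecnt_image) (auto simp: inj_on_def)

lemma ecnt_InlInr: fixes A :: "'a set" and B :: "'b set"
  shows "ecnt (Inl ` A \<union> Inr ` B) = ecnt A + ecnt B"
proof -
  have d: "Inl ` A \<inter> Inr ` B = {}" by auto
  have a: "ecnt (Inl ` A :: ('a + 'b) set) = ecnt A" by (rule ecnt_image) (simp add: inj_on_def)
  have b: "ecnt (Inr ` B :: ('a + 'b) set) = ecnt B" by (rule ecnt_image) (simp add: inj_on_def)
  show ?thesis using ecnt_Un[OF d] a b by simp
qed

lemma ecnt_Inl: "ecnt (Inl ` A) = ecnt A"
  by (rule ecnt_image) (simp add: inj_on_def)

lemma ec_R:
  assumes "x \<in> gverts G - {u}" "y \<in> gverts G - {u}" "gsrc G f = u"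
  shows "ec (R_move G u f s) x y = ec G x y + (if x = s \<and> y = grng G f then ecnt (received G u) else 0)"
  unfolding ec_def Epair_R[OF assms] by (simp add: ecnt_InlInr ecnt_Inl)

lemma wf_O: "wf_graph G \<Longrightarrow> \<forall>e\<in>emitted G v. p e < n \<Longrightarrow> wf_graph (O_move G v n p)"
  unfolding wf_graph_def emitted_def by auto

lemma wf_I: "wf_graph G \<Longrightarrow> \<forall>e\<in>received G v. p e < n \<Longrightarrow> wf_graph (I_move G v n p)"
  unfolding wf_graph_def received_def by auto

lemma wf_R: "wf_graph G \<Longrightarrow> R_ok G u f s \<Longrightarrow> s \<noteq> u \<Longrightarrow> wf_graph (R_move G u f s)"
  unfolding wf_graph_def R_ok_def by (auto simp: emitted_def received_def split: sum.splits)

definition hat :: "nat \<Rightarrow> nat \<Rightarrow> nat \<Rightarrow> nat" where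
  "hat N v x = (if x = N then v else x)"

definition Omat :: "(nat \<Rightarrow> nat \<Rightarrow> enat) \<Rightarrow> nat \<Rightarrow> nat \<Rightarrow> (nat \<Rightarrow> enat) \<Rightarrow> nat \<Rightarrow> nat \<Rightarrow> enat" where
  "Omat A v N P x y = (if hat N v x = v then (if x = N then P (hat N v y) else dm (A v (hat N v y)) (P (hat N v y)))
     else A (hat N v x) (hat N v y))"

definition Imat :: "(nat \<Rightarrow> nat \<Rightarrow> enat) \<Rightarrow> nat \<Rightarrow> nat \<Rightarrow> (nat \<Rightarrow> enat) \<Rightarrow> nat \<Rightarrow> nat \<Rightarrow> enat" where
  "Imat A v N Q x y = (if hat N v y = v then (if y = N then Q (hat N v x) else dm (A (hat N v x) v) (Q (hat N v x)))
     else A (hat N v x) (hat N v y))"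

definition Rmat :: "(nat \<Rightarrow> nat \<Rightarrow> enat) \<Rightarrow> nat \<Rightarrow> nat \<Rightarrow> nat \<Rightarrow> nat \<Rightarrow> nat \<Rightarrow> enat" where
  "Rmat A s u w x y = A x y + (if x = s \<and> y = w then A s u else 0)"

lemma bij_phi:
  assumes "v \<in> V" "N \<notin> V"
  shows "bij_betw (\<lambda>(x,i). if x = v \<and> i = (1::nat) then N else x)
     ({(w,0) | w. w \<in> V \<and> w \<noteq> v} \<union> {(v,i) | i. i < 2}) (insert N V)"
  unfolding bij_betw_def
proof
  show "inj_on (\<lambda>(x,i). if x = v \<and> i = (1::nat) then N else x) ({(w,0) | w. w \<in> V \<and> w \<noteq> v} \<union> {(v,i) | i. i < 2})"
    using assms by (auto simp: inj_on_def less_2_cases_iff)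
  show "(\<lambda>(x,i). if x = v \<and> i = (1::nat) then N else x) ` ({(w,0) | w. w \<in> V \<and> w \<noteq> v} \<union> {(v,i) | i. i < 2}) = insert N V"
  proof
    show "(\<lambda>(x,i). if x = v \<and> i = (1::nat) then N else x) ` ({(w,0) | w. w \<in> V \<and> w \<noteq> v} \<union> {(v,i) | i. i < 2}) \<subseteq> insert N V"
      using assms by auto
    show "insert N V \<subseteq> (\<lambda>(x,i). if x = v \<and> i = (1::nat) then N else x) ` ({(w,0) | w. w \<in> V \<and> w \<noteq> v} \<union> {(v,i) | i. i < 2})"
    proof
      fix z assume z: "z \<in> insert N V"
      show "z \<in> (\<lambda>(x,i). if x = v \<and> i = (1::nat) then N else x) ` ({(w,0) | w. w \<in> V \<and> w \<noteq> v} \<union> {(v,i) | i. i < 2})"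
      proof (cases "z = N")
        case True
        then show ?thesis by (rule_tac x="(v,1)" in image_eqI) auto
      next
        case False
        show ?thesis
        proof (cases "z = v")
          case True
          then show ?thesis using assms by (rule_tac x="(v,0)" in image_eqI) auto
        next
          case False
          then show ?thesis using \<open>z \<noteq> N\<close> z by (rule_tac x="(z,0)" in image_eqI) auto
        qed
      qed
    qed
  qed
qed

lemma ecnt_filter_gm:
  assumes "x \<in> V" "y \<in> V"
  shows "ecnt {e \<in> Epair (gm V A) x y. Q e} = ecnt {k. enat k < A x y \<and> Q (enc x y k)}"
  unfolding Epair_gm_filter[OF assms] by (rule ecnt_image) (simp add: inj_enc)

lemma emitted_gm: "v \<in> V \<Longrightarrow> emitted (gm V A) v = {enc v y k | y k. y \<in> V \<and> enat k < A v y}"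
  by (auto simp: emitted_def)

lemma received_gm: "v \<in> V \<Longrightarrow> received (gm V A) v = {enc x v k | x k. x \<in> V \<and> enat k < A x v}"
  by (auto simp: received_def)

lemma hat_simps[simp]: "hat N v N = v" "x \<noteq> N \<Longrightarrow> hat N v x = x"
  by (simp_all add: hat_def)

lemma O_step:
  assumes fin: "finite V" and v: "v \<in> V" and N: "N \<notin> V"
    and Ple: "\<forall>y\<in>V. P y \<le> A v y" and Pfin: "\<forall>y\<in>V. P y \<noteq> \<infinity>"
    and ne1: "\<exists>y\<in>V. 0 < P y" and ne2: "\<exists>y\<in>V. P y < A v y"
  shows "move_step (gm V A) (gm (insert N V) (Omat A v N P))"
proof -
  define G where "G = gm V A"
  define p where "p e = (if enat (kof e) < P (yof e) then 1 else (0::nat))" for e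
  have em: "emitted G v = {enc v y k | y k. y \<in> V \<and> enat k < A v y}"
    unfolding G_def using v by (rule emitted_gm)
  obtain y1 where y1: "y1 \<in> V" "0 < P y1" using ne1 by blast
  have e1: "enc v y1 0 \<in> emitted G v" "p (enc v y1 0) = 1"
    using y1 Ple by (auto simp: em p_def zero_enat_def intro: less_le_trans)
  obtain y2 where y2: "y2 \<in> V" "P y2 < A v y2" using ne2 by blast
  obtain q where q: "P y2 = enat q" using Pfin y2 by auto
  have e2: "enc v y2 q \<in> emitted G v" "p (enc v y2 q) = 0"
    using y2 q by (auto simp: em p_def)
  have fin1: "finite {e \<in> emitted G v. p e = 1}"
  proof (rule finite_subset)
    show "{e \<in> emitted G v. p e = 1} \<subseteq> (\<Union>y\<in>V. enc v y ` {..<the_enat (P y)})"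
    proof
      fix e assume "e \<in> {e \<in> emitted G v. p e = 1}"
      then obtain y k where "e = enc v y k" "y \<in> V" "enat k < P y" by (auto simp: em p_def split: if_splits)
      then show "e \<in> (\<Union>y\<in>V. enc v y ` {..<the_enat (P y)})" using Pfin by fastforce
    qed
    show "finite (\<Union>y\<in>V. enc v y ` {..<the_enat (P y)})" using fin by simp
  qed
  have "{i. i < 2 \<and> infinite {e\<in>emitted G v. p e = i}} \<subseteq> {0}"
    using fin1 by (auto simp: less_2_cases_iff)
  then have card: "card {i. i < 2 \<and> infinite {e\<in>emitted G v. p e = i}} \<le> 1"
    by (metis card_mono finite.intros is_singleton_altdef is_singletonI)
  have ok: "O_ok G v 2 p"
    unfolding O_ok_def
  proof (intro conjI)
    show "v \<in> gverts G" using v by (simp add: G_def)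
    show "\<not> is_sink G v" using e1 by (auto simp: is_sink_def)
    show "\<forall>e\<in>emitted G v. p e < 2" by (simp add: p_def)
    show "\<forall>i<2. \<exists>e\<in>emitted G v. p e = i" using e1 e2 by (auto simp: less_2_cases_iff)
  qed (rule card)
  have wfG: "wf_graph G" using fin by (simp add: G_def wf_gm)
  have wfO: "wf_graph (O_move G v 2 p)" using wfG by (rule wf_O) (simp add: p_def)
  have iso: "graph_iso (O_move G v 2 p) (gm (insert N V) (Omat A v N P))"
  proof (rule iso_by_counts[OF wfO wf_gm])
    show "finite (insert N V)" using fin by simp
    show "bij_betw (\<lambda>(x,i). if x = v \<and> i = (1::nat) then N else x) (gverts (O_move G v 2 p)) (gverts (gm (insert N V) (Omat A v N P)))"
      using bij_phi[OF v N] by (simp add: G_def)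
  next
    fix a b assume a: "a \<in> gverts (O_move G v 2 p)" and b: "b \<in> gverts (O_move G v 2 p)"
    obtain x i where xi: "a = (x,i)" by force
    obtain y j where yj: "b = (y,j)" by force
    have x: "x \<in> V" "x = v \<or> i = 0" "i < 2" using a xi v by (auto simp: G_def)
    have y: "y \<in> V" "y = v \<or> j = 0" "j < 2" using b yj v by (auto simp: G_def)
    have xN: "x \<noteq> N" "y \<noteq> N" using x y N by auto
    have lhs: "ec (O_move G v 2 p) a b = ecnt {k. enat k < A x y \<and> (x = v \<longrightarrow> p (enc x y k) = i)}"
      using ec_O[of x i G v 2 p y j] a b xi yj ecnt_filter_gm[OF x(1) y(1)] by (simp add: G_def)
    define \<phi> where "\<phi> = (\<lambda>(x,i). if x = v \<and> i = (1::nat) then N else x)"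
    have "ec (gm (insert N V) (Omat A v N P)) (\<phi> a) (\<phi> b) = Omat A v N P (\<phi> a) (\<phi> b)"
      using x y by (intro ec_gm) (auto simp: \<phi>_def xi yj)
    also have "\<dots> = ec (O_move G v 2 p) a b"
    proof (cases "x = v")
      case False
      then have "\<phi> a = x" "\<phi> b = (if y = v \<and> j = 1 then N else y)" by (auto simp: \<phi>_def xi yj)
      moreover have "hat N v (if y = v \<and> j = 1 then N else y) = y" using xN by (auto simp: hat_def)
      ultimately show ?thesis using False lhs xN by (simp add: Omat_def ecnt_lt)
    next
      case True
      have hb: "hat N v (\<phi> b) = y" using xN by (auto simp: hat_def \<phi>_def yj)
      show ?thesis
      proof (cases "i = 1")
        case True
        then have "{k. enat k < A x y \<and> (x = v \<longrightarrow> p (enc x y k) = i)} = {k. enat k < A v y \<and> enat k < P y}"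
          using \<open>x = v\<close> by (auto simp: p_def)
        moreover have "\<phi> a = N" using True \<open>x = v\<close> by (simp add: \<phi>_def xi)
        ultimately show ?thesis using lhs hb ecnt_lt_min[of "A v y" "P y"] Ple y(1)
          by (simp add: Omat_def min_absorb2)
      next
        case False
        then have "{k. enat k < A x y \<and> (x = v \<longrightarrow> p (enc x y k) = i)} = {k. enat k < A v y \<and> \<not> enat k < P y}"
          using \<open>x = v\<close> x by (auto simp: p_def)
        moreover have "\<phi> a = v" using False \<open>x = v\<close> by (simp add: \<phi>_def xi)
        ultimately show ?thesis using lhs hb ecnt_diff[of "A v y" "P y"] v N
          by (auto simp: Omat_def)
      qed
    qed
    finally show "ec (O_move G v 2 p) a b = ec (gm (insert N V) (Omat A v N P))
       ((\<lambda>(x,i). if x = v \<and> i = (1::nat) then N else x) a) ((\<lambda>(x,i). if x = v \<and> i = (1::nat) then N else x) b)"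
      by (simp add: \<phi>_def)
  qed
  have "wf_graph (gm (insert N V) (Omat A v N P))" using fin by (simp add: wf_gm)
  then show ?thesis unfolding move_step_def G_def[symmetric]
    using wfG ok iso by blast
qed



lemma I_step:
  assumes fin: "finite V" and v: "v \<in> V" and N: "N \<notin> V"
    and Qle: "\<forall>x\<in>V. Q x \<le> A x v"
    and ne1: "\<exists>x\<in>V. 0 < Q x" and ne2: "\<exists>x\<in>V. Q x < A x v"
    and rfin: "\<forall>y\<in>V. A v y \<noteq> \<infinity>" and rnz: "\<exists>y\<in>V. A v y \<noteq> 0"
  shows "move_step (gm V A) (gm (insert N V) (Imat A v N Q))"
proof -
  define G where "G = gm V A"
  define p where "p e = (if enat (kof e) < Q (xof e) then 1 else (0::nat))" for e
  have em: "emitted G v = {enc v y k | y k. y \<in> V \<and> enat k < A v y}"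
    unfolding G_def using v by (rule emitted_gm)
  have rc: "received G v = {enc x v k | x k. x \<in> V \<and> enat k < A x v}"
    unfolding G_def using v by (rule received_gm)
  obtain x1 where x1: "x1 \<in> V" "0 < Q x1" using ne1 by blast
  have e1: "enc x1 v 0 \<in> received G v" "p (enc x1 v 0) = 1"
    using x1 Qle by (auto simp: rc p_def zero_enat_def intro: less_le_trans)
  obtain x2 where x2: "x2 \<in> V" "Q x2 < A x2 v" using ne2 by blast
  obtain q where q: "Q x2 = enat q" using x2 by (cases "Q x2") auto
  have e2: "enc x2 v q \<in> received G v" "p (enc x2 v q) = 0"
    using x2 q by (auto simp: rc p_def)
  obtain y0 where y0: "y0 \<in> V" "A v y0 \<noteq> 0" using rnz by blast
  have e0: "enc v y0 0 \<in> emitted G v" using y0 by (auto simp: em zero_enat_def[symmetric] gr_zeroI)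
  have finem: "finite (emitted G v)"
  proof (rule finite_subset)
    show "emitted G v \<subseteq> (\<Union>y\<in>V. enc v y ` {..<the_enat (A v y)})"
    proof
      fix e assume "e \<in> emitted G v"
      then obtain y k where "e = enc v y k" "y \<in> V" "enat k < A v y" by (auto simp: em)
      then show "e \<in> (\<Union>y\<in>V. enc v y ` {..<the_enat (A v y)})" using rfin by fastforce
    qed
    show "finite (\<Union>y\<in>V. enc v y ` {..<the_enat (A v y)})" using fin by simp
  qed
  have ok: "I_ok G v 2 p"
    unfolding I_ok_def
  proof (intro conjI)
    show "v \<in> gverts G" using v by (simp add: G_def)
    show "is_regular G v" using e0 finem by (auto simp: is_regular_def is_sink_def is_inf_emitter_def)
    show "\<not> is_source G v" using e1 by (auto simp: is_source_def)
    show "\<forall>e\<in>received G v. p e < 2" by (simp add: p_def)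
    show "\<forall>i<2. \<exists>e\<in>received G v. p e = i" using e1 e2 by (auto simp: less_2_cases_iff)
  qed
  have wfG: "wf_graph G" using fin by (simp add: G_def wf_gm)
  have wfI: "wf_graph (I_move G v 2 p)" using wfG by (rule wf_I) (simp add: p_def)
  have iso: "graph_iso (I_move G v 2 p) (gm (insert N V) (Imat A v N Q))"
  proof (rule iso_by_counts[OF wfI wf_gm])
    show "finite (insert N V)" using fin by simp
    show "bij_betw (\<lambda>(x,i). if x = v \<and> i = (1::nat) then N else x) (gverts (I_move G v 2 p)) (gverts (gm (insert N V) (Imat A v N Q)))"
      using bij_phi[OF v N] by (simp add: G_def)
  next
    fix a b assume a: "a \<in> gverts (I_move G v 2 p)" and b: "b \<in> gverts (I_move G v 2 p)"
    obtain x i where xi: "a = (x,i)" by force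
    obtain y j where yj: "b = (y,j)" by force
    have x: "x \<in> V" "x = v \<or> i = 0" "i < 2" using a xi v by (auto simp: G_def)
    have y: "y \<in> V" "y = v \<or> j = 0" "j < 2" using b yj v by (auto simp: G_def)
    have xN: "x \<noteq> N" "y \<noteq> N" using x y N by auto
    have lhs: "ec (I_move G v 2 p) a b = ecnt {k. enat k < A x y \<and> (y = v \<longrightarrow> p (enc x y k) = j)}"
      using ec_I[of x i G v 2 p y j] a b xi yj ecnt_filter_gm[OF x(1) y(1)] by (simp add: G_def)
    define \<phi> where "\<phi> = (\<lambda>(x,i). if x = v \<and> i = (1::nat) then N else x)"
    have "ec (gm (insert N V) (Imat A v N Q)) (\<phi> a) (\<phi> b) = Imat A v N Q (\<phi> a) (\<phi> b)"
      using x y by (intro ec_gm) (auto simp: \<phi>_def xi yj)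
    also have "\<dots> = ec (I_move G v 2 p) a b"
    proof (cases "y = v")
      case False
      then have "\<phi> b = y" "\<phi> a = (if x = v \<and> i = 1 then N else x)" by (auto simp: \<phi>_def xi yj)
      moreover have "hat N v (if x = v \<and> i = 1 then N else x) = x" using xN by (auto simp: hat_def)
      ultimately show ?thesis using False lhs xN by (simp add: Imat_def ecnt_lt)
    next
      case True
      have ha: "hat N v (\<phi> a) = x" using xN by (auto simp: hat_def \<phi>_def xi)
      show ?thesis
      proof (cases "j = 1")
        case True
        then have "{k. enat k < A x y \<and> (y = v \<longrightarrow> p (enc x y k) = j)} = {k. enat k < A x v \<and> enat k < Q x}"
          using \<open>y = v\<close> by (auto simp: p_def)
        moreover have "\<phi> b = N" using True \<open>y = v\<close> by (simp add: \<phi>_def yj)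
        ultimately show ?thesis using lhs ha ecnt_lt_min[of "A x v" "Q x"] Qle x(1)
          by (simp add: Imat_def min_absorb2)
      next
        case False
        then have "{k. enat k < A x y \<and> (y = v \<longrightarrow> p (enc x y k) = j)} = {k. enat k < A x v \<and> \<not> enat k < Q x}"
          using \<open>y = v\<close> y by (auto simp: p_def)
        moreover have "\<phi> b = v" using False \<open>y = v\<close> by (simp add: \<phi>_def yj)
        ultimately show ?thesis using lhs ha ecnt_diff[of "A x v" "Q x"] v N
          by (auto simp: Imat_def)
      qed
    qed
    finally show "ec (I_move G v 2 p) a b = ec (gm (insert N V) (Imat A v N Q))
       ((\<lambda>(x,i). if x = v \<and> i = (1::nat) then N else x) a) ((\<lambda>(x,i). if x = v \<and> i = (1::nat) then N else x) b)"
      by (simp add: \<phi>_def)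
  qed
  have "wf_graph (gm (insert N V) (Imat A v N Q))" using fin by (simp add: wf_gm)
  then show ?thesis unfolding move_step_def G_def[symmetric]
    using wfG ok iso by blast
qed

lemma R_step:
  assumes fin: "finite V" and u: "u \<in> V" and w: "w \<in> V" and s: "s \<in> V" and wu: "w \<noteq> u" and su: "s \<noteq> u"
    and row: "\<forall>y\<in>V. A u y = (if y = w then 1 else 0)"
    and col: "\<forall>x\<in>V. x \<noteq> s \<longrightarrow> A x u = 0"
  shows "move_step (gm V A) (gm (V - {u}) (Rmat A s u w))"
proof -
  define G where "G = gm V A"
  define f where "f = enc u w 0"
  have em: "emitted G u = {f}"
  proof -
    have "emitted G u = {enc u y k | y k. y \<in> V \<and> enat k < A u y}"
      unfolding G_def using u by (rule emitted_gm)
    also have "\<dots> = {f}"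
    proof
      show "{enc u y k | y k. y \<in> V \<and> enat k < A u y} \<subseteq> {f}"
      proof
        fix e assume "e \<in> {enc u y k | y k. y \<in> V \<and> enat k < A u y}"
        then obtain y k where e: "e = enc u y k" "y \<in> V" "enat k < A u y" by blast
        have "y = w \<and> k = 0"
        proof (cases "y = w")
          case True
          then have "enat k < 1" using e row by simp
          then show ?thesis using True by (simp add: one_enat_def)
        next
          case False
          then have "enat k < 0" using e row by simp
          then show ?thesis by simp
        qed
        then show "e \<in> {f}" using e by (simp add: f_def)
      qed
      show "{f} \<subseteq> {enc u y k | y k. y \<in> V \<and> enat k < A u y}"
        using row w by (auto simp: f_def zero_enat_def one_enat_def)
    qed
    finally show ?thesis .
  qed
  have rc: "received G u = Epair G s u"
    using col s u by (auto simp: G_def received_def Epair_def zero_enat_def[symmetric])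
  have ok: "R_ok G u f s"
    unfolding R_ok_def
  proof (intro conjI)
    show "u \<in> gverts G" "s \<in> gverts G" using u s by (simp_all add: G_def)
    show "is_regular G u" using em by (simp add: is_regular_def is_sink_def is_inf_emitter_def)
    show "emitted G u = {f}" by (rule em)
    show "grng G f \<noteq> u" using wu by (simp add: G_def f_def)
    show "\<forall>e\<in>received G u. gsrc G e = s" by (simp add: rc Epair_def)
  qed
  have wfG: "wf_graph G" using fin by (simp add: G_def wf_gm)
  have wfR: "wf_graph (R_move G u f s)" using wfG ok su by (rule wf_R)
  have iso: "graph_iso (R_move G u f s) (gm (V - {u}) (Rmat A s u w))"
  proof (rule iso_by_counts[OF wfR wf_gm])
    show "finite (V - {u})" using fin by simp
    show "bij_betw id (gverts (R_move G u f s)) (gverts (gm (V - {u}) (Rmat A s u w)))"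
      by (simp add: G_def)
  next
    fix x y assume x: "x \<in> gverts (R_move G u f s)" and y: "y \<in> gverts (R_move G u f s)"
    have x': "x \<in> V - {u}" and y': "y \<in> V - {u}" using x y by (simp_all add: G_def)
    have "ec (R_move G u f s) x y = ec G x y + (if x = s \<and> y = grng G f then ecnt (received G u) else 0)"
      using x' y' by (intro ec_R) (auto simp: G_def f_def)
    also have "\<dots> = Rmat A s u w x y"
    proof -
      have "ecnt (received G u) = ec G s u" unfolding rc ec_def ..
      also have "\<dots> = A s u" unfolding G_def using s u by (rule ec_gm)
      finally have "ecnt (received G u) = A s u" .
      moreover have "ec G x y = A x y" unfolding G_def using x' y' by (simp add: ec_gm)
      moreover have "grng G f = w" by (simp add: G_def f_def)
      ultimately show ?thesis by (simp add: Rmat_def)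
    qed
    also have "\<dots> = ec (gm (V - {u}) (Rmat A s u w)) (id x) (id y)"
      using x' y' by (simp add: ec_gm)
    finally show "ec (R_move G u f s) x y = ec (gm (V - {u}) (Rmat A s u w)) (id x) (id y)" .
  qed
  have "wf_graph (gm (V - {u}) (Rmat A s u w))" using fin by (simp add: wf_gm)
  then show ?thesis unfolding move_step_def G_def[symmetric]
    using wfG ok iso by blast
qed

lemma me_step: "move_step G H \<Longrightarrow> G \<sim>\<^sub>M H"
  by (simp add: move_equiv_def r_into_equivclp)

lemma me_trans: "G \<sim>\<^sub>M H \<Longrightarrow> H \<sim>\<^sub>M K \<Longrightarrow> G \<sim>\<^sub>M K"
  unfolding move_equiv_def by (meson equivp_evquivclp equivp_transp)

lemma me_sym: "G \<sim>\<^sub>M H \<Longrightarrow> H \<sim>\<^sub>M G"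
  unfolding move_equiv_def by (rule equivclp_sym)

lemma me_refl: "G \<sim>\<^sub>M G"
  unfolding move_equiv_def by simp

lemma dm_self[simp]: "dm a a = 0"
  by (cases a) (auto simp: dm_def zero_enat_def)

lemma dm_zero[simp]: "dm a 0 = a"
  by (simp add: dm_def)

lemma fresh_nat: "finite (W::nat set) \<Longrightarrow> \<exists>N'. N' \<notin> W"
  using ex_new_if_finite infinite_UNIV_nat by blast

lemma absorb_aux:
  assumes fin: "finite W" and NW: "N \<in> W" and dW: "d \<in> W" and dN: "d \<noteq> N"
  shows "\<forall>M::nat \<Rightarrow> nat \<Rightarrow> enat. card {x\<in>W. M x N \<noteq> 0} = k \<longrightarrow> (\<forall>y\<in>W. M N y = (if y = d then 1 else 0)) \<longrightarrow>
     gm W M \<sim>\<^sub>M gm (W - {N}) (\<lambda>x y. M x y + (if y = d then M x N else 0))"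
proof (induction k rule: less_induct)
  case (less k)
  show ?case
  proof (intro allI impI)
    fix M :: "nat \<Rightarrow> nat \<Rightarrow> enat" assume ck: "card {x\<in>W. M x N \<noteq> 0} = k" and row: "\<forall>y\<in>W. M N y = (if y = d then 1 else 0)"
    define S where "S = {x\<in>W. M x N \<noteq> 0}"
    have finS: "finite S" using fin by (simp add: S_def)
    have MNN: "M N N = 0" using row NW dN by auto
    have NS: "N \<notin> S" using MNN by (simp add: S_def)
    show "gm W M \<sim>\<^sub>M gm (W - {N}) (\<lambda>x y. M x y + (if y = d then M x N else 0))"
    proof (cases "card S \<le> 1")
      case True
      obtain s where s: "s \<in> W" "s \<noteq> N" "\<forall>x\<in>W. x \<noteq> s \<longrightarrow> M x N = 0"
      proof (cases "S = {}")
        case True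
        then show ?thesis using that[of d] dW dN by (auto simp: S_def)
      next
        case False
        then obtain s0 where "S = {s0}" using \<open>card S \<le> 1\<close> finS
          by (metis card_0_eq card_1_singletonE le_antisym less_one linorder_not_le)
        then show ?thesis using that[of s0] NS by (auto simp: S_def)
      qed
      have ms: "move_step (gm W M) (gm (W - {N}) (Rmat M s N d))"
        by (rule R_step[OF fin NW dW s(1) dN s(2)]) (use row s in auto)
      have "gm (W - {N}) (Rmat M s N d) = gm (W - {N}) (\<lambda>x y. M x y + (if y = d then M x N else 0))"
        by (rule gm_cong) (use s in \<open>auto simp: Rmat_def\<close>)
      then show ?thesis using me_step[OF ms] by simp
    next
      case False
      then obtain s s' where ss: "s \<in> S" "s' \<in> S" "s \<noteq> s'"
        by (metis One_nat_def card_le_Suc0_iff_eq finS not_less_eq_eq)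
      have sW: "s \<in> W" "s' \<in> W" "M s N \<noteq> 0" "M s' N \<noteq> 0" using ss by (auto simp: S_def)
      have sN: "s \<noteq> N" using NS ss by auto
      obtain N' where N': "N' \<notin> W" using fresh_nat[OF fin] by blast
      define Q where "Q x = (if x = s then M s N else 0)" for x
      have QN: "Q N = 0" using sN by (simp add: Q_def)
      have ms1: "move_step (gm W M) (gm (insert N' W) (Imat M N N' Q))"
      proof (rule I_step[OF fin NW N'])
        show "\<forall>x\<in>W. Q x \<le> M x N" by (simp add: Q_def)
        show "\<exists>x\<in>W. 0 < Q x" using sW by (auto simp: Q_def intro!: bexI[of _ s])
        show "\<exists>x\<in>W. Q x < M x N" using sW ss by (auto simp: Q_def intro!: bexI[of _ s'])
        show "\<forall>y\<in>W. M N y \<noteq> \<infinity>" using row by (simp del: not_infinity_eq)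
        show "\<exists>y\<in>W. M N y \<noteq> 0" using row dW by (auto intro!: bexI[of _ d])
      qed
      define M1 where "M1 = Imat M N N' Q"
      have hN': "hat N' N N' = N" by simp
      have M1_row': "M1 N' y = (if y = d then 1 else 0)" if "y \<in> insert N' W" for y
        using that row N' dW dN MNN QN by (auto simp: M1_def Imat_def hat_def)
      have M1_col': "M1 x N' = Q x" if "x \<in> W" for x
        using that N' by (auto simp: M1_def Imat_def hat_def)
      have M1_N'N': "M1 N' N' = 0" using QN by (simp add: M1_def Imat_def)
      have ms2: "move_step (gm (insert N' W) M1) (gm (insert N' W - {N'}) (Rmat M1 s N' d))"
      proof (rule R_step)
        show "finite (insert N' W)" using fin by simp
      next
        show "\<forall>y\<in>insert N' W. M1 N' y = (if y = d then 1 else 0)" using M1_row' by blast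
        show "\<forall>x\<in>insert N' W. x \<noteq> s \<longrightarrow> M1 x N' = 0" using M1_col' M1_N'N' by (auto simp: Q_def)
      qed (use dW sW N' in auto)
      have W': "insert N' W - {N'} = W" using N' by auto
      define M2 where "M2 = Rmat M1 s N' d"
      have M1W: "M1 x y = (if y = N then dm (M x N) (Q x) else M x y)" if "x \<in> W" "y \<in> W" for x y
        using that N' by (auto simp: M1_def Imat_def hat_def)
      have M2W: "M2 x y = (if y = N then dm (M x N) (Q x) else M x y) + (if x = s \<and> y = d then M s N else 0)"
        if "x \<in> W" "y \<in> W" for x y
        using that M1W M1_col' sW by (simp add: M2_def Rmat_def Q_def)
      have rowM2: "\<forall>y\<in>W. M2 N y = (if y = d then 1 else 0)"
        using M2W[OF NW] row MNN QN sN by auto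
      have colM2: "M2 x N = (if x = s then 0 else M x N)" if "x \<in> W" for x
        using M2W[OF that NW] dN by (simp add: Q_def)
      have "{x\<in>W. M2 x N \<noteq> 0} = S - {s}" using colM2 by (auto simp: S_def split: if_splits)
      moreover have "card S > 0" using finS ss(1) card_gt_0_iff by blast
      ultimately have "card {x\<in>W. M2 x N \<noteq> 0} < k"
        using ck finS ss(1) by (simp add: S_def[symmetric])
      then have ih: "gm W M2 \<sim>\<^sub>M gm (W - {N}) (\<lambda>x y. M2 x y + (if y = d then M2 x N else 0))"
        using less[rule_format, OF _ refl] rowM2 by blast
      have "gm (W - {N}) (\<lambda>x y. M2 x y + (if y = d then M2 x N else 0)) =
            gm (W - {N}) (\<lambda>x y. M x y + (if y = d then M x N else 0))"
      proof (rule gm_cong)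
        fix x y assume x: "x \<in> W - {N}" and y: "y \<in> W - {N}"
        show "M2 x y + (if y = d then M2 x N else 0) = M x y + (if y = d then M x N else 0)"
          using M2W[of x y] colM2[of x] x y by (auto simp: add.commute)
      qed
      note eq = this
      have e1: "gm W M \<sim>\<^sub>M gm (insert N' W) M1" using me_step[OF ms1] by (simp add: M1_def)
      have e2: "gm (insert N' W) M1 \<sim>\<^sub>M gm W M2" using me_step[OF ms2] by (simp add: W' M2_def)
      show ?thesis using me_trans[OF e1 me_trans[OF e2 ih]] unfolding eq .
    qed
  qed
qed

lemma absorb:
  assumes fin: "finite W" and NW: "N \<in> W" and dW: "d \<in> W" and dN: "d \<noteq> N"
    and row: "\<forall>y\<in>W. M N y = (if y = d then 1 else 0)"
  shows "gm W M \<sim>\<^sub>M gm (W - {N}) (\<lambda>x y. M x y + (if y = d then M x N else 0))"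
  using absorb_aux[OF fin NW dW dN] row by blast

lemma enat_sub1: "(a::enat) \<noteq> 0 \<Longrightarrow> 1 + (a - 1) = a"
  by (cases a) (auto simp: one_enat_def zero_enat_def)

lemma enat_ge1: "(a::enat) \<noteq> 0 \<Longrightarrow> 1 \<le> a"
  by (cases a) (auto simp: one_enat_def zero_enat_def)

lemma expand_aux:
  assumes fin: "finite W" and NW: "N \<in> W" and bW: "b \<in> W" and bN: "b \<noteq> N"
  shows "\<forall>M::nat \<Rightarrow> nat \<Rightarrow> enat. (\<Sum>y\<in>W. the_enat (M N y)) = k \<longrightarrow>
     (\<forall>x\<in>W. M x N = (if x = b then 1 else 0)) \<longrightarrow> (\<forall>y\<in>W. M N y \<noteq> \<infinity>) \<longrightarrow> (\<exists>y\<in>W. M N y \<noteq> 0) \<longrightarrow>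
     gm W M \<sim>\<^sub>M gm (W - {N}) (\<lambda>x y. M x y + (if x = b then M N y else 0))"
proof (induction k rule: less_induct)
  case (less k)
  show ?case
  proof (intro allI impI)
    fix M :: "nat \<Rightarrow> nat \<Rightarrow> enat"
    assume sk: "(\<Sum>y\<in>W. the_enat (M N y)) = k" and col: "\<forall>x\<in>W. M x N = (if x = b then 1 else 0)"
      and rfin: "\<forall>y\<in>W. M N y \<noteq> \<infinity>" and nz: "\<exists>y\<in>W. M N y \<noteq> 0"
    have MNN: "M N N = 0" using col NW bN by auto
    show "gm W M \<sim>\<^sub>M gm (W - {N}) (\<lambda>x y. M x y + (if x = b then M N y else 0))"
    proof (cases "\<exists>t\<in>W. \<forall>y\<in>W. M N y = (if y = t then 1 else 0)")
      case True
      then obtain t where t: "t \<in> W" "\<forall>y\<in>W. M N y = (if y = t then 1 else 0)" by blast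
      have tN: "t \<noteq> N" using t MNN NW by (metis zero_neq_one)
      have ms: "move_step (gm W M) (gm (W - {N}) (Rmat M b N t))"
        by (rule R_step[OF fin NW t(1) bW tN bN]) (use t col in auto)
      have "gm (W - {N}) (Rmat M b N t) = gm (W - {N}) (\<lambda>x y. M x y + (if x = b then M N y else 0))"
        by (rule gm_cong) (use t col bW in \<open>auto simp: Rmat_def\<close>)
      then show ?thesis using me_step[OF ms] by simp
    next
      case False
      obtain t where t: "t \<in> W" "M N t \<noteq> 0" using nz by blast
      have tN: "t \<noteq> N" using t MNN by auto
      define P where "P y = (if y = t then 1 else (0::enat))" for y
      have notsmall: "\<exists>y\<in>W. P y < M N y"
      proof (rule ccontr)
        assume "\<not> (\<exists>y\<in>W. P y < M N y)"
        then have le: "\<forall>y\<in>W. M N y \<le> P y" by (auto simp: not_less)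
        have "\<forall>y\<in>W. M N y = (if y = t then 1 else 0)"
        proof
          fix y assume "y \<in> W"
          show "M N y = (if y = t then 1 else 0)"
          proof (cases "y = t")
            case True
            then show ?thesis using le \<open>y \<in> W\<close> t enat_ge1[of "M N t"] by (auto simp: P_def)
          next
            case False
            then show ?thesis using le \<open>y \<in> W\<close> by (auto simp: P_def)
          qed
        qed
        then show False using False t by blast
      qed
      obtain N' where N': "N' \<notin> W" using fresh_nat[OF fin] by blast
      have ms1: "move_step (gm W M) (gm (insert N' W) (Omat M N N' P))"
      proof (rule O_step[OF fin NW N'])
        show "\<forall>y\<in>W. P y \<le> M N y" using t enat_ge1 by (auto simp: P_def)
        show "\<forall>y\<in>W. P y \<noteq> \<infinity>" by (simp add: P_def del: not_infinity_eq)
        show "\<exists>y\<in>W. 0 < P y" using t by (auto simp: P_def intro!: bexI[of _ t])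
        show "\<exists>y\<in>W. P y < M N y" by (rule notsmall)
      qed
      define M1 where "M1 = Omat M N N' P"
      have PN: "P N = 0" using tN by (simp add: P_def)
      have M1_row': "M1 N' y = (if y = t then 1 else 0)" if "y \<in> insert N' W" for y
        using that N' t tN by (auto simp: M1_def Omat_def hat_def P_def)
      have M1_col': "M1 x N' = (if x = b then 1 else 0)" if "x \<in> insert N' W" for x
        using that N' col MNN PN bN bW by (auto simp: M1_def Omat_def hat_def)
      have ms2: "move_step (gm (insert N' W) M1) (gm (insert N' W - {N'}) (Rmat M1 b N' t))"
      proof (rule R_step)
        show "finite (insert N' W)" using fin by simp
      next
        show "\<forall>y\<in>insert N' W. M1 N' y = (if y = t then 1 else 0)" using M1_row' by blast
        show "\<forall>x\<in>insert N' W. x \<noteq> b \<longrightarrow> M1 x N' = 0" using M1_col' by auto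
      qed (use t bW N' in auto)
      have W': "insert N' W - {N'} = W" using N' by auto
      define M2 where "M2 = Rmat M1 b N' t"
      have M1W: "M1 x y = (if x = N then dm (M N y) (P y) else M x y)" if "x \<in> W" "y \<in> W" for x y
        using that N' by (auto simp: M1_def Omat_def hat_def)
      have M2W: "M2 x y = (if x = N then dm (M N y) (P y) else M x y) + (if x = b \<and> y = t then 1 else 0)"
        if "x \<in> W" "y \<in> W" for x y
        using that M1W M1_col' bW by (simp add: M2_def Rmat_def)
      have rowM2: "M2 N y = M N y - P y" if "y \<in> W" for y
        using M2W[OF NW that] bN by (simp add: dm_def P_def)
      have colM2: "\<forall>x\<in>W. M2 x N = (if x = b then 1 else 0)"
        using M2W[OF _ NW] col MNN PN tN by (auto simp: dm_def)
      have rfin2: "\<forall>y\<in>W. M2 N y \<noteq> \<infinity>"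
      proof
        fix y assume y: "y \<in> W"
        then obtain i where "M N y = enat i" using rfin by auto
        then show "M2 N y \<noteq> \<infinity>" using rowM2[OF y] by (simp add: P_def one_enat_def zero_enat_def)
      qed
      have nz2: "\<exists>y\<in>W. M2 N y \<noteq> 0"
      proof (rule ccontr)
        assume "\<not> (\<exists>y\<in>W. M2 N y \<noteq> 0)"
        then have z: "\<forall>y\<in>W. M N y - P y = 0" using rowM2 by auto
        have "\<forall>y\<in>W. M N y = (if y = t then 1 else 0)"
        proof
          fix y assume y: "y \<in> W"
          have "M N y \<le> P y" using z y rfin by (cases "M N y") (auto simp: P_def one_enat_def zero_enat_def)
          then show "M N y = (if y = t then 1 else 0)"
            using t enat_ge1[of "M N t"] by (cases "y = t") (auto simp: P_def)
        qed
        then show False using False t by blast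
      qed
      have sumlt: "(\<Sum>y\<in>W. the_enat (M2 N y)) < k"
        unfolding sk[symmetric]
      proof (rule sum_strict_mono_ex1[OF fin])
        show "\<forall>y\<in>W. the_enat (M2 N y) \<le> the_enat (M N y)"
          using rowM2 rfin by (auto simp: P_def one_enat_def)
        show "\<exists>y\<in>W. the_enat (M2 N y) < the_enat (M N y)"
          using rowM2[OF t(1)] rfin t by (auto simp: P_def one_enat_def zero_enat_def intro!: bexI[of _ t])
      qed
      have ih: "gm W M2 \<sim>\<^sub>M gm (W - {N}) (\<lambda>x y. M2 x y + (if x = b then M2 N y else 0))"
        using spec[OF less[OF sumlt], of M2] colM2 rfin2 nz2 by blast
      have "gm (W - {N}) (\<lambda>x y. M2 x y + (if x = b then M2 N y else 0)) =
            gm (W - {N}) (\<lambda>x y. M x y + (if x = b then M N y else 0))"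
      proof (rule gm_cong)
        fix x y assume x: "x \<in> W - {N}" and y: "y \<in> W - {N}"
        show "M2 x y + (if x = b then M2 N y else 0) = M x y + (if x = b then M N y else 0)"
        proof (cases "x = b \<and> y = t")
          case True
          then show ?thesis using M2W[of x y] rowM2[of y] x y t enat_sub1[of "M N t"]
            by (simp add: P_def add.assoc)
        next
          case False
          then show ?thesis using M2W[of x y] rowM2[of y] x y by (auto simp: P_def)
        qed
      qed
      note eq = this
      have e1: "gm W M \<sim>\<^sub>M gm (insert N' W) M1" using me_step[OF ms1] by (simp add: M1_def)
      have e2: "gm (insert N' W) M1 \<sim>\<^sub>M gm W M2" using me_step[OF ms2] by (simp add: W' M2_def)
      show ?thesis using me_trans[OF e1 me_trans[OF e2 ih]] unfolding eq .
    qed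
  qed
qed

lemma expand:
  assumes fin: "finite W" and NW: "N \<in> W" and bW: "b \<in> W" and bN: "b \<noteq> N"
    and col: "\<forall>x\<in>W. M x N = (if x = b then 1 else 0)" and rfin: "\<forall>y\<in>W. M N y \<noteq> \<infinity>"
    and nz: "\<exists>y\<in>W. M N y \<noteq> 0"
  shows "gm W M \<sim>\<^sub>M gm (W - {N}) (\<lambda>x y. M x y + (if x = b then M N y else 0))"
  using expand_aux[OF fin NW bW bN] col rfin nz by blast

lemma colL:
  assumes fin: "finite V" and c: "c \<in> V" and d: "d \<in> V" and cd: "c \<noteq> d"
    and pos: "A c d \<noteq> 0" and ne2: "\<exists>y\<in>V. (if y = d then 1 else 0) < A c y"
    and A': "\<And>x y. x \<in> V \<Longrightarrow> y \<in> V \<Longrightarrow> A' x y = (if x = c then A c y - (if y = d then 1 else 0) + (if y = d then A c c else 0)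
                 else A x y + (if y = d then A x c else 0))"
  shows "gm V A \<sim>\<^sub>M gm V A'"
proof -
  obtain N where N: "N \<notin> V" using fresh_nat[OF fin] by blast
  define P where "P y = (if y = d then 1 else (0::enat))" for y
  have ms: "move_step (gm V A) (gm (insert N V) (Omat A c N P))"
  proof (rule O_step[OF fin c N])
    show "\<forall>y\<in>V. P y \<le> A c y" using pos enat_ge1 by (auto simp: P_def)
    show "\<forall>y\<in>V. P y \<noteq> \<infinity>" by (simp add: P_def del: not_infinity_eq)
    show "\<exists>y\<in>V. 0 < P y" using d by (auto simp: P_def intro!: bexI[of _ d])
    show "\<exists>y\<in>V. P y < A c y" using ne2 by (simp add: P_def)
  qed
  define M where "M = Omat A c N P"
  have row: "\<forall>y\<in>insert N V. M N y = (if y = d then 1 else 0)"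
    using N d cd by (auto simp: M_def Omat_def hat_def P_def)
  have ab: "gm (insert N V) M \<sim>\<^sub>M gm (insert N V - {N}) (\<lambda>x y. M x y + (if y = d then M x N else 0))"
    by (rule absorb) (use fin d N row in auto)
  have W: "insert N V - {N} = V" using N by auto
  have "gm V (\<lambda>x y. M x y + (if y = d then M x N else 0)) = gm V A'"
  proof (rule gm_cong)
    fix x y assume x: "x \<in> V" and y: "y \<in> V"
    have "M x y = (if x = c then dm (A c y) (P y) else A x y)" using x y N by (auto simp: M_def Omat_def hat_def)
    moreover have "M x N = A x c" using x N cd by (auto simp: M_def Omat_def hat_def P_def)
    ultimately show "M x y + (if y = d then M x N else 0) = A' x y"
      using A'[OF x y] by (cases "x = c") (simp_all add: dm_def P_def)
  qed
  then show ?thesis using me_trans[OF me_step[OF ms[folded M_def]] ab] unfolding W by simp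
qed

lemma rowL:
  assumes fin: "finite V" and a: "a \<in> V" and b: "b \<in> V" and ab: "a \<noteq> b"
    and pos: "A b a \<noteq> 0" and rfin: "\<forall>y\<in>V. A a y \<noteq> \<infinity>" and aa: "A a a \<noteq> 0"
    and A': "\<And>x y. x \<in> V \<Longrightarrow> y \<in> V \<Longrightarrow>
       A' x y = (if y = a then A x a - (if x = b then 1 else 0) else A x y) + (if x = b then A a y else 0)"
  shows "gm V A \<sim>\<^sub>M gm V A'"
proof -
  obtain N where N: "N \<notin> V" using fresh_nat[OF fin] by blast
  define Q where "Q x = (if x = b then 1 else (0::enat))" for x
  have ms: "move_step (gm V A) (gm (insert N V) (Imat A a N Q))"
  proof (rule I_step[OF fin a N])
    show "\<forall>x\<in>V. Q x \<le> A x a" using pos enat_ge1 by (auto simp: Q_def)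
    show "\<exists>x\<in>V. 0 < Q x" using b by (auto simp: Q_def intro!: bexI[of _ b])
    show "\<exists>x\<in>V. Q x < A x a" using a ab aa by (auto simp: Q_def intro!: bexI[of _ a])
    show "\<forall>y\<in>V. A a y \<noteq> \<infinity>" by (rule rfin)
    show "\<exists>y\<in>V. A a y \<noteq> 0" using a aa by blast
  qed
  define M where "M = Imat A a N Q"
  have col: "\<forall>x\<in>insert N V. M x N = (if x = b then 1 else 0)"
    using N b ab by (auto simp: M_def Imat_def hat_def Q_def)
  have MNy: "M N y = A a y" if "y \<in> V" for y
    using that N ab by (auto simp: M_def Imat_def hat_def Q_def)
  have MNN: "M N N = 0" using ab by (simp add: M_def Imat_def Q_def)
  have ex: "gm (insert N V) M \<sim>\<^sub>M gm (insert N V - {N}) (\<lambda>x y. M x y + (if x = b then M N y else 0))"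
  proof (rule expand)
    show "\<forall>y\<in>insert N V. M N y \<noteq> \<infinity>" using MNy MNN rfin by (auto simp del: not_infinity_eq)
    show "\<exists>y\<in>insert N V. M N y \<noteq> 0" using MNy[OF a] aa a by (metis insertCI)
  qed (use fin b N col in auto)
  have W: "insert N V - {N} = V" using N by auto
  have "gm V (\<lambda>x y. M x y + (if x = b then M N y else 0)) = gm V A'"
  proof (rule gm_cong)
    fix x y assume x: "x \<in> V" and y: "y \<in> V"
    have "M x y = (if y = a then dm (A x a) (Q x) else A x y)" using x y N by (auto simp: M_def Imat_def hat_def)
    then show "M x y + (if x = b then M N y else 0) = A' x y"
      using A'[OF x y] MNy[OF y] by (simp add: dm_def Q_def)
  qed
  then show ?thesis using me_trans[OF me_step[OF ms[folded M_def]] ex] unfolding W by simp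
qed

lemma col_step:
  assumes c: "c < n" and d: "d < n" and cd: "c \<noteq> d" and pos: "m \<le> c \<or> 1 \<le> B c d"
  shows "mat_move_equiv n (JplusB n m B) (JplusB n m (add_column B c d))"
  unfolding mat_move_equiv_def gom_gm
proof (rule colL)
  show "finite {0..<n}" by simp
  show "c \<in> {0..<n}" "d \<in> {0..<n}" using c d by auto
  show "c \<noteq> d" by (rule cd)
  show "JplusB n m B c d \<noteq> 0" using pos cd by (auto simp: JplusB_def J_mat_def zero_enat_def)
  show "\<exists>y\<in>{0..<n}. (if y = d then 1 else 0) < JplusB n m B c y"
    using c cd by (intro bexI[of _ c]) (auto simp: JplusB_def J_mat_def one_enat_def zero_enat_def)
next
  fix x y assume x: "x \<in> {0..<n}" and y: "y \<in> {0..<n}"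
  show "JplusB n m (add_column B c d) x y =
    (if x = c then JplusB n m B c y - (if y = d then 1 else 0) + (if y = d then JplusB n m B c c else 0)
     else JplusB n m B x y + (if y = d then JplusB n m B x c else 0))"
  proof (cases "x < m")
    case False
    then show ?thesis by (simp add: JplusB_def J_mat_def)
  next
    case True
    show ?thesis
    proof (cases "x = c")
      case True
      then have "1 \<le> B c d" using pos \<open>x < m\<close> by auto
      then show ?thesis using True \<open>x < m\<close> cd
        by (auto simp: JplusB_def J_mat_def add_column_def one_enat_def zero_enat_def)
    next
      case False
      then show ?thesis using \<open>x < m\<close>
        by (auto simp: JplusB_def J_mat_def add_column_def one_enat_def zero_enat_def)
    qed
  qed
qed

lemma row_step:
  assumes a: "a < m" and b: "b < m" and ab: "a \<noteq> b" and pos: "1 \<le> B b a" and mn: "m \<le> n"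
  shows "mat_move_equiv n (JplusB n m B) (JplusB n m (add_row B a b))"
  unfolding mat_move_equiv_def gom_gm
proof (rule rowL)
  show "finite {0..<n}" by simp
  show "a \<in> {0..<n}" "b \<in> {0..<n}" using a b mn by auto
  show "a \<noteq> b" by (rule ab)
  show "JplusB n m B b a \<noteq> 0" using pos ab b by (auto simp: JplusB_def J_mat_def zero_enat_def)
  show "\<forall>y\<in>{0..<n}. JplusB n m B a y \<noteq> \<infinity>" using a by (simp add: JplusB_def J_mat_def one_enat_def zero_enat_def)
  show "JplusB n m B a a \<noteq> 0" using a by (simp add: JplusB_def J_mat_def one_enat_def zero_enat_def)
next
  fix x y assume x: "x \<in> {0..<n}" and y: "y \<in> {0..<n}"
  show "JplusB n m (add_row B a b) x y =
    (if y = a then JplusB n m B x a - (if x = b then 1 else 0) else JplusB n m B x y) + (if x = b then JplusB n m B a y else 0)"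
  proof (cases "x < m")
    case False
    then show ?thesis using b by (auto simp: JplusB_def J_mat_def)
  next
    case True
    show ?thesis
    proof (cases "x = b")
      case True
      then show ?thesis using \<open>x < m\<close> ab a pos
        by (auto simp: JplusB_def J_mat_def add_row_def one_enat_def zero_enat_def)
    next
      case False
      then show ?thesis using \<open>x < m\<close>
        by (auto simp: JplusB_def J_mat_def add_row_def one_enat_def zero_enat_def)
    qed
  qed
qed

lemma mme_trans: "mat_move_equiv n A B \<Longrightarrow> mat_move_equiv n B C \<Longrightarrow> mat_move_equiv n A C"
  unfolding mat_move_equiv_def by (rule me_trans)

lemma mme_sym: "mat_move_equiv n A B \<Longrightarrow> mat_move_equiv n B A"
  unfolding mat_move_equiv_def by (rule me_sym)

lemma relpow_mono_set: "(R::('a \<times> 'a) set) \<subseteq> S \<Longrightarrow> R ^^ k \<subseteq> S ^^ k"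
  by (induction k) (simp_all add: relcomp_mono relpow.simps)

definition Qr :: "nat \<Rightarrow> nat \<Rightarrow> (nat \<Rightarrow> nat \<Rightarrow> nat) \<Rightarrow> (nat \<times> nat) set" where
  "Qr n m B = {(u,v). u \<noteq> v \<and> u < n \<and> v < n \<and> (m \<le> u \<or> 1 \<le> B u v)}"

definition Pr :: "nat \<Rightarrow> (nat \<Rightarrow> nat \<Rightarrow> nat) \<Rightarrow> (nat \<times> nat) set" where
  "Pr m B = {(u,v). u \<noteq> v \<and> u < m \<and> v < m \<and> 1 \<le> B u v}"

lemma add_column_comm: "c \<noteq> d \<Longrightarrow> x \<noteq> d \<Longrightarrow>
  add_column (add_column B x d) c d = add_column (add_column B c d) x d"
  by (auto simp: add_column_def fun_eq_iff)

lemma add_row_comm: "a \<noteq> b \<Longrightarrow> x \<noteq> b \<Longrightarrow>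
  add_row (add_row B x b) a b = add_row (add_row B a b) x b"
  by (auto simp: add_row_def fun_eq_iff)

lemma col_path:
  "\<forall>B. (c,d) \<in> (Qr n m B) ^^ k \<longrightarrow> c \<noteq> d \<longrightarrow>
     mat_move_equiv n (JplusB n m B) (JplusB n m (add_column B c d))"
proof (induction k rule: less_induct)
  case (less k)
  show ?case
  proof (intro allI impI)
    fix B assume p: "(c,d) \<in> (Qr n m B) ^^ k" and cd: "c \<noteq> d"
    obtain k' where k: "k = Suc k'" using p cd by (cases k) auto
    obtain x where px: "(c,x) \<in> (Qr n m B) ^^ k'" and xd: "(x,d) \<in> Qr n m B"
      using p unfolding k by (meson relpow_Suc_E)
    show "mat_move_equiv n (JplusB n m B) (JplusB n m (add_column B c d))"
    proof (cases "x = c")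
      case True
      then show ?thesis using xd by (intro col_step) (auto simp: Qr_def)
    next
      case False
      obtain k'' where k': "k' = Suc k''" using px False by (cases k') auto
      obtain y where py: "(c,y) \<in> (Qr n m B) ^^ k''" and yx: "(y,x) \<in> Qr n m B"
        using px unfolding k' by (meson relpow_Suc_E)
      show ?thesis
      proof (cases "y = d")
        case True
        then show ?thesis using less[of k''] py cd k k' by auto
      next
        case False
        define B1 where "B1 = add_column B x d"
        have xd': "x \<noteq> d" "x < n" "d < n" "m \<le> x \<or> 1 \<le> B x d" using xd by (auto simp: Qr_def)
        have sub: "Qr n m B \<subseteq> Qr n m B1"
          by (auto simp: Qr_def B1_def add_column_def)
        have yd: "(y,d) \<in> Qr n m B1" using yx False xd' by (auto simp: Qr_def B1_def add_column_def)
        have "(c,d) \<in> (Qr n m B1) ^^ Suc k''"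
          using relpow_mono_set[OF sub] py yd by auto
        then have ih: "mat_move_equiv n (JplusB n m B1) (JplusB n m (add_column B1 c d))"
          using less[of "Suc k''"] cd k k' by auto
        have s1: "mat_move_equiv n (JplusB n m B) (JplusB n m B1)"
          unfolding B1_def using xd' by (intro col_step) auto
        have s3: "mat_move_equiv n (JplusB n m (add_column B c d)) (JplusB n m (add_column (add_column B c d) x d))"
          using xd' cd by (intro col_step) (auto simp: add_column_def)
        have eq: "add_column B1 c d = add_column (add_column B c d) x d"
          unfolding B1_def by (rule add_column_comm[OF cd xd'(1)])
        show ?thesis using mme_trans[OF s1 mme_trans[OF ih[unfolded eq] mme_sym[OF s3]]] .
      qed
    qed
  qed
qed

lemma row_path:
  assumes mn: "m \<le> n"
  shows "\<forall>B. (b,a) \<in> (Pr m B) ^^ k \<longrightarrow> a \<noteq> b \<longrightarrow>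
     mat_move_equiv n (JplusB n m B) (JplusB n m (add_row B a b))"
proof (induction k rule: less_induct)
  case (less k)
  show ?case
  proof (intro allI impI)
    fix B assume p: "(b,a) \<in> (Pr m B) ^^ k" and ab: "a \<noteq> b"
    obtain k' where k: "k = Suc k'" using p ab by (cases k) auto
    obtain x where bx: "(b,x) \<in> Pr m B" and px: "(x,a) \<in> (Pr m B) ^^ k'"
      using p unfolding k by (meson relpow_Suc_E2)
    show "mat_move_equiv n (JplusB n m B) (JplusB n m (add_row B a b))"
    proof (cases "x = a")
      case True
      then show ?thesis using bx mn by (intro row_step) (auto simp: Pr_def)
    next
      case False
      obtain k'' where k': "k' = Suc k''" using px False by (cases k') auto
      obtain z where xz: "(x,z) \<in> Pr m B" and pz: "(z,a) \<in> (Pr m B) ^^ k''"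
        using px unfolding k' by (meson relpow_Suc_E2)
      show ?thesis
      proof (cases "z = b")
        case True
        then show ?thesis using less[of k''] pz ab k k' by auto
      next
        case False
        define B1 where "B1 = add_row B x b"
        have bx': "x \<noteq> b" "x < m" "b < m" "1 \<le> B b x" using bx by (auto simp: Pr_def)
        have sub: "Pr m B \<subseteq> Pr m B1"
          by (auto simp: Pr_def B1_def add_row_def)
        have bz: "(b,z) \<in> Pr m B1" using xz False bx' by (auto simp: Pr_def B1_def add_row_def)
        have "(b,a) \<in> (Pr m B1) ^^ Suc k''"
          using relpow_mono_set[OF sub] pz bz by (meson relpow_Suc_I2 subsetD)
        then have ih: "mat_move_equiv n (JplusB n m B1) (JplusB n m (add_row B1 a b))"
          using less[of "Suc k''"] ab k k' by auto
        have s1: "mat_move_equiv n (JplusB n m B) (JplusB n m B1)"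
          unfolding B1_def using bx' mn by (intro row_step) auto
        have s3: "mat_move_equiv n (JplusB n m (add_row B a b)) (JplusB n m (add_row (add_row B a b) x b))"
          using bx' ab mn by (intro row_step) (auto simp: add_row_def)
        have eq: "add_row B1 a b = add_row (add_row B a b) x b"
          unfolding B1_def by (rule add_row_comm[OF ab bx'(1)])
        show ?thesis using mme_trans[OF s1 mme_trans[OF ih[unfolded eq] mme_sym[OF s3]]] .
      qed
    qed
  qed
qed

lemma irr_path:
  assumes irr: "irreducible_mat k A" and sub: "\<And>x y. x < k \<Longrightarrow> y < k \<Longrightarrow> x \<noteq> y \<Longrightarrow> 0 < A x y \<Longrightarrow> (x,y) \<in> R"
    and c: "c < k" and d: "d < k"
  shows "(c,d) \<in> R\<^sup>*"
proof -
  let ?E = "{(gsrc (gm {0..<k} A) e, grng (gm {0..<k} A) e) | e. e \<in> gedges (gm {0..<k} A)}"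
  have "(c,d) \<in> ?E\<^sup>*" using irr c d unfolding irreducible_mat_def strongly_connected_def gom_gm by auto
  moreover have "?E \<subseteq> R\<^sup>="
  proof
    fix p assume "p \<in> ?E"
    then obtain x y j where p: "p = (x,y)" "x < k" "y < k" "enat j < A x y" by auto
    then have "0 < A x y" using zero_le[of "enat j"] by (metis le_less_trans)
    then show "p \<in> R\<^sup>=" using sub p by (cases "x = y") auto
  qed
  ultimately have "(c,d) \<in> (R\<^sup>=)\<^sup>*" using rtrancl_mono by blast
  then show ?thesis by simp
qed

theorem proposition7p3:
  fixes n m :: nat and B B' :: "nat \<Rightarrow> nat \<Rightarrow> nat"
  assumes "m \<le> n"
    and "\<forall>i j. m \<le> i \<and> i < n \<and> j < n \<longrightarrow> B i j = 0"
    and "irreducible_mat n (JplusB n m B)"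
    and "irreducible_mat m (JplusB n m B)"
    and "(\<exists>c d. c < n \<and> d < n \<and> c \<noteq> d \<and> B' = add_column B c d) \<or>
         (\<exists>a b. a < n \<and> b < n \<and> a \<noteq> b \<and> nonzero_row n B a \<and> nonzero_row n B b \<and> B' = add_row B a b)"
  shows "mat_move_equiv n (JplusB n m B) (JplusB n m B')"
  using assms(5)
proof
  assume "\<exists>c d. c < n \<and> d < n \<and> c \<noteq> d \<and> B' = add_column B c d"
  then obtain c d where cd: "c < n" "d < n" "c \<noteq> d" "B' = add_column B c d" by blast
  have "(c,d) \<in> (Qr n m B)\<^sup>*"
  proof (rule irr_path[OF assms(3) _ cd(1,2)])
    fix x y assume "x < n" "y < n" "x \<noteq> y" "0 < JplusB n m B x y"
    then show "(x,y) \<in> Qr n m B"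
      by (cases "x < m") (auto simp: Qr_def JplusB_def J_mat_def zero_enat_def)
  qed
  then obtain k where "(c,d) \<in> (Qr n m B) ^^ k" using rtrancl_power by blast
  then show ?thesis using col_path cd by blast
next
  assume "\<exists>a b. a < n \<and> b < n \<and> a \<noteq> b \<and> nonzero_row n B a \<and> nonzero_row n B b \<and> B' = add_row B a b"
  then obtain a b where ab: "a < n" "b < n" "a \<noteq> b" "nonzero_row n B a" "nonzero_row n B b" "B' = add_row B a b"
    by blast
  have am: "a < m" using ab(1,4) assms(2) unfolding nonzero_row_def by (meson not_less)
  have bm: "b < m" using ab(2,5) assms(2) unfolding nonzero_row_def by (meson not_less)
  have "(b,a) \<in> (Pr m B)\<^sup>*"
  proof (rule irr_path[OF assms(4) _ bm am])
    fix x y assume "x < m" "y < m" "x \<noteq> y" "0 < JplusB n m B x y"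
    then show "(x,y) \<in> Pr m B"
      by (auto simp: Pr_def JplusB_def J_mat_def zero_enat_def)
  qed
  then obtain k where "(b,a) \<in> (Pr m B) ^^ k" using rtrancl_power by blast
  then show ?thesis using row_path[OF assms(1)] ab by blast
qed

end
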